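(* Let $X,Y,Z$ be random variables on finite alphabets $\mathcal{X},\mathcal{Y},\mathcal{Z}$. For each $y\in\mathcal{Y}$ with $\Pr(Y=y)>0$, let $(A_y,B_y,C_y)$ be the random triple on $\mathcal{X}\times\mathcal{Y}\times\mathcal{Z}$ with $$\Pr(A_y=x,B_y=y',C_y=z)=\begin{cases}0 & \text{if } \Pr(Z=z)=0,\\ \dfrac{\Pr(X=x,Y=y',Z=z)\,\Pr(Z=z\mid Y=y)}{\Pr(Z=z)} & \text{otherwise.}\end{cases}$$ Then $\sum_{y:\Pr(Y=y)>0}\Pr(Y=y)\,H(A_y)\le H(X)$.
   Context: $H$ denotes Shannon entropy. *)

theory Defs
  imports "HOL-Probability.Probability"
begin

definition shannon_entropy :: "('a::finite \<Rightarrow> real) \<Rightarrow> real" where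
  "shannon_entropy p = - (\<Sum>x\<in>UNIV. if p x = 0 then 0 else p x * log 2 (p x))"

definition probX :: "('x \<times> 'y \<times> 'z) pmf \<Rightarrow> 'x \<Rightarrow> real" where
  "probX P x = pmf (map_pmf (\<lambda>(x,y,z). x) P) x"
definition probY :: "('x \<times> 'y \<times> 'z) pmf \<Rightarrow> 'y \<Rightarrow> real" where
  "probY P y = pmf (map_pmf (\<lambda>(x,y,z). y) P) y"
definition probZ :: "('x \<times> 'y \<times> 'z) pmf \<Rightarrow> 'z \<Rightarrow> real" where
  "probZ P z = pmf (map_pmf (\<lambda>(x,y,z). z) P) z"
definition probYZ :: "('x \<times> 'y \<times> 'z) pmf \<Rightarrow> 'y \<Rightarrow> 'z \<Rightarrow> real" where
  "probYZ P y z = pmf (map_pmf (\<lambda>(x,y,z). (y,z)) P) (y,z)"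

definition condZY :: "('x \<times> 'y \<times> 'z) pmf \<Rightarrow> 'z \<Rightarrow> 'y \<Rightarrow> real" where
  "condZY P z y = probYZ P y z / probY P y"

definition tripleABC :: "('x \<times> 'y \<times> 'z) pmf \<Rightarrow> 'y \<Rightarrow> 'x \<Rightarrow> 'y \<Rightarrow> 'z \<Rightarrow> real" where
  "tripleABC P y x y' z =
     (if probZ P z = 0 then 0 else pmf P (x, y', z) * condZY P z y / probZ P z)"

definition lawA :: "('x \<times> 'y::finite \<times> 'z::finite) pmf \<Rightarrow> 'y \<Rightarrow> 'x \<Rightarrow> real" where
  "lawA P y x = (\<Sum>y'\<in>UNIV. \<Sum>z\<in>UNIV. tripleABC P y x y' z)"

end

theory Submission
  imports Defs
begin

definition phi :: "real \<Rightarrow> real" where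
  "phi t = (if t = 0 then 0 else t * log 2 t)"

lemma phi_tangent:
  assumes a: "a \<ge> 0" and m: "m > 0"
  shows "phi a \<ge> phi m + (a - m) * (log 2 m + 1 / ln 2)"
proof (cases "a = 0")
  case True
  have "phi m + (a - m) * (log 2 m + 1 / ln 2) = - m / ln 2"
    using True m by (simp add: phi_def algebra_simps)
  also have "\<dots> \<le> 0" using m by simp
  finally show ?thesis using True by (simp add: phi_def)
next
  case False
  hence ap: "a > 0" using a by simp
  have l: "ln (m / a) \<le> m / a - 1" using ap m by (intro ln_le_minus_one) simp
  have "a * ln (m / a) \<le> a * (m / a - 1)" using l ap by (intro mult_left_mono) auto
  hence key: "a * ln (m / a) \<le> m - a" using ap by (simp add: algebra_simps)
  have lnm: "ln (m / a) = ln m - ln a" using ap m by (simp add: ln_div)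
  have "phi a - (phi m + (a - m) * (log 2 m + 1 / ln 2)) =
        (a * ln a - a * ln m - (a - m)) / ln 2"
    using ap m by (simp add: phi_def log_def field_simps)
  also have "\<dots> \<ge> 0" using key lnm by (simp add: algebra_simps)
  finally show ?thesis by simp
qed

lemma phi_jensen:
  fixes w :: "'b \<Rightarrow> real" and a :: "'b \<Rightarrow> real"
  assumes fin: "finite W" and w: "\<And>y. y \<in> W \<Longrightarrow> w y \<ge> 0"
    and ws: "(\<Sum>y\<in>W. w y) = 1" and a: "\<And>y. y \<in> W \<Longrightarrow> a y \<ge> 0"
  shows "phi (\<Sum>y\<in>W. w y * a y) \<le> (\<Sum>y\<in>W. w y * phi (a y))"
proof -
  define m where "m = (\<Sum>y\<in>W. w y * a y)"
  have m0: "m \<ge> 0" unfolding m_def using w a by (intro sum_nonneg) auto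
  show ?thesis
  proof (cases "m = 0")
    case True
    have "\<forall>y\<in>W. w y * a y = 0" using True fin w a unfolding m_def
      by (subst sum_nonneg_eq_0_iff[symmetric]) auto
    hence "\<forall>y\<in>W. w y * phi (a y) = 0" by (auto simp: phi_def)
    hence "(\<Sum>y\<in>W. w y * phi (a y)) = 0" by (rule sum.neutral)
    thus ?thesis using True by (simp add: m_def[symmetric] phi_def)
  next
    case False
    hence mp: "m > 0" using m0 by simp
    define c where "c = log 2 m + 1 / ln 2"
    have "(\<Sum>y\<in>W. w y * phi (a y)) \<ge> (\<Sum>y\<in>W. w y * (phi m + (a y - m) * c))"
      using phi_tangent[OF _ mp] w a unfolding c_def
      by (intro sum_mono mult_left_mono) auto
    also have "(\<Sum>y\<in>W. w y * (phi m + (a y - m) * c)) =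
        phi m * (\<Sum>y\<in>W. w y) + c * (\<Sum>y\<in>W. w y * a y) - c * m * (\<Sum>y\<in>W. w y)"
      by (simp add: algebra_simps sum.distrib sum_subtractf sum_distrib_left)
    also have "\<dots> = phi m" using ws by (simp add: m_def)
    finally show ?thesis by (simp add: m_def)
  qed
qed

lemma pmf_map_finite:
  fixes P :: "('a::finite) pmf"
  shows "pmf (map_pmf f P) v = (\<Sum>u\<in>UNIV. if f u = v then pmf P u else 0)"
proof -
  have "pmf (map_pmf f P) v = measure P (f -` {v})" by (simp add: pmf_map)
  also have "\<dots> = sum (pmf P) (f -` {v})" by (simp add: measure_measure_pmf_finite)
  also have "\<dots> = sum (pmf P) (UNIV \<inter> f -` {v})" by simp
  also have "\<dots> = (\<Sum>u\<in>UNIV. if f u = v then pmf P u else 0)"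
    by (subst sum.inter_restrict) auto
  finally show ?thesis .
qed

lemma sum3:
  fixes g :: "('x::finite \<times> 'y::finite \<times> 'z::finite) \<Rightarrow> real"
  shows "(\<Sum>u\<in>UNIV. g u) = (\<Sum>x\<in>UNIV. \<Sum>y\<in>UNIV. \<Sum>z\<in>UNIV. g (x,y,z))"
  by (simp add: UNIV_Times_UNIV[symmetric] sum.cartesian_product del: UNIV_Times_UNIV)

context
  fixes P :: "('x::finite \<times> 'y::finite \<times> 'z::finite) pmf"
begin

lemma pX: "probX P x = (\<Sum>y\<in>UNIV. \<Sum>z\<in>UNIV. pmf P (x,y,z))"
  unfolding probX_def pmf_map_finite sum3
  by (simp add: if_distrib sum.If_cases)

lemma pY: "probY P y = (\<Sum>x\<in>UNIV. \<Sum>z\<in>UNIV. pmf P (x,y,z))"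
  unfolding probY_def pmf_map_finite sum3
  by (simp add: if_distrib sum.If_cases)

lemma pZ: "probZ P z = (\<Sum>x\<in>UNIV. \<Sum>y\<in>UNIV. pmf P (x,y,z))"
  unfolding probZ_def pmf_map_finite sum3
  by (simp add: if_distrib sum.If_cases)

lemma pYZ: "probYZ P y z = (\<Sum>x\<in>UNIV. pmf P (x,y,z))"
proof -
  have i: "(if (b, c) = (y, z) then pmf P (a, b, c) else 0) =
      (if b = y then (if c = z then pmf P (a, b, c) else 0) else 0)" for a b c
    by auto
  have j: "(\<Sum>b\<in>UNIV. \<Sum>c\<in>UNIV. if b = y then h b c else 0) = (\<Sum>c\<in>UNIV. h y c)"
    for h :: "'y \<Rightarrow> 'z \<Rightarrow> real"
    by (subst sum.swap) (simp add: sum.delta')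
  show ?thesis unfolding probYZ_def pmf_map_finite sum3
    by (simp only: case_prod_conv i j) (simp add: sum.delta')
qed

lemma pY_sum: "(\<Sum>y\<in>UNIV. probY P y) = 1"
  unfolding probY_def by (rule sum_pmf_eq_1) auto

lemma pYZ_sum: "(\<Sum>y\<in>UNIV. probYZ P y z) = probZ P z"
  unfolding pYZ pZ by (rule sum.swap)

lemma pYZ_le: "probYZ P y z \<le> probY P y"
  unfolding pYZ pY by (subst sum.swap) (intro sum_mono member_le_sum, auto intro: sum_nonneg)

lemma pZ0: "probZ P z = 0 \<Longrightarrow> pmf P (x,y,z) = 0"
proof -
  assume "probZ P z = 0"
  hence "\<forall>x\<in>UNIV. (\<Sum>y\<in>UNIV. pmf P (x,y,z)) = 0" unfolding pZ
    by (subst sum_nonneg_eq_0_iff[symmetric]) (auto intro: sum_nonneg)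
  hence "(\<Sum>y\<in>UNIV. pmf P (x,y,z)) = 0" by simp
  thus ?thesis by (subst (asm) sum_nonneg_eq_0_iff) auto
qed

lemma lawA_nonneg: "lawA P y x \<ge> 0"
  unfolding lawA_def tripleABC_def condZY_def probYZ_def probY_def probZ_def
  by (intro sum_nonneg) auto

definition W where "W = {y. probY P y > 0}"

lemma W_sum: "(\<Sum>y\<in>W. probY P y) = 1"
proof -
  have "(\<Sum>y\<in>W. probY P y) = (\<Sum>y\<in>UNIV. probY P y)"
    unfolding W_def
  proof (rule sum.mono_neutral_left)
    show "\<forall>i\<in>UNIV - {y. 0 < probY P y}. probY P i = 0"
    proof
      fix i assume "i \<in> UNIV - {y. 0 < probY P y}"
      hence "probY P i \<le> 0" by auto
      moreover have "probY P i \<ge> 0" by (simp add: probY_def)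
      ultimately show "probY P i = 0" by linarith
    qed
  qed auto
  thus ?thesis using pY_sum by simp
qed

lemma W_YZ: "(\<Sum>y\<in>W. probYZ P y z) = probZ P z"
proof -
  have "(\<Sum>y\<in>W. probYZ P y z) = (\<Sum>y\<in>UNIV. probYZ P y z)"
    unfolding W_def
  proof (rule sum.mono_neutral_left)
    show "\<forall>i\<in>UNIV - {y. 0 < probY P y}. probYZ P i z = 0"
    proof
      fix i assume "i \<in> UNIV - {y. 0 < probY P y}"
      hence "probY P i \<le> 0" by auto
      moreover have "probYZ P i z \<ge> 0" by (simp add: probYZ_def)
      ultimately show "probYZ P i z = 0" using pYZ_le[of i z] by linarith
    qed
  qed auto
  thus ?thesis using pYZ_sum by simp
qed

lemma mixture: "(\<Sum>y\<in>W. probY P y * lawA P y x) = probX P x"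
proof -
  define g where "g y' z = (if probZ P z = 0 then 0 else pmf P (x,y',z) / probZ P z)" for y' z
  have e: "probY P y * lawA P y x = (\<Sum>y'\<in>UNIV. \<Sum>z\<in>UNIV. g y' z * probYZ P y z)"
    if "y \<in> W" for y
  proof -
    have "probY P y > 0" using that by (simp add: W_def)
    thus ?thesis unfolding lawA_def tripleABC_def condZY_def g_def
      by (simp add: sum_distrib_left) (intro sum.cong refl, auto simp: field_simps)
  qed
  have "(\<Sum>y\<in>W. probY P y * lawA P y x) =
        (\<Sum>y\<in>W. \<Sum>y'\<in>UNIV. \<Sum>z\<in>UNIV. g y' z * probYZ P y z)"
    using e by simp
  also have "\<dots> = (\<Sum>y'\<in>UNIV. \<Sum>z\<in>UNIV. \<Sum>y\<in>W. g y' z * probYZ P y z)"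
    by (subst sum.swap) (simp add: sum.swap[of _ W])
  also have "\<dots> = (\<Sum>y'\<in>UNIV. \<Sum>z\<in>UNIV. g y' z * probZ P z)"
    by (simp add: sum_distrib_left[symmetric] W_YZ)
  also have "\<dots> = (\<Sum>y'\<in>UNIV. \<Sum>z\<in>UNIV. pmf P (x,y',z))"
    by (intro sum.cong refl) (auto simp: g_def pZ0)
  also have "\<dots> = probX P x" by (simp add: pX)
  finally show ?thesis .
qed

end

lemma ent_phi: "shannon_entropy p = - (\<Sum>x\<in>UNIV. phi (p x))"
  unfolding shannon_entropy_def phi_def by simp

theorem lemma3:
  fixes P :: "('x::finite \<times> 'y::finite \<times> 'z::finite) pmf"
  shows "(\<Sum>y\<in>{y. probY P y > 0}. probY P y * shannon_entropy (lawA P y))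
           \<le> shannon_entropy (probX P)"
proof -
  have "(\<Sum>y\<in>{y. probY P y > 0}. probY P y * shannon_entropy (lawA P y)) =
        - (\<Sum>x\<in>UNIV. \<Sum>y\<in>W P. probY P y * phi (lawA P y x))"
    unfolding ent_phi W_def
    by (simp add: sum_distrib_left sum_negf) (rule sum.swap)
  also have "\<dots> \<le> - (\<Sum>x\<in>UNIV. phi (probX P x))"
  proof -
    have "phi (probX P x) \<le> (\<Sum>y\<in>W P. probY P y * phi (lawA P y x))" for x
      using phi_jensen[of "W P" "probY P" "\<lambda>y. lawA P y x"] W_sum[of P] lawA_nonneg
        mixture[of P x]
      by (auto simp: W_def probY_def)
    hence "(\<Sum>x\<in>UNIV. phi (probX P x)) \<le> (\<Sum>x\<in>UNIV. \<Sum>y\<in>W P. probY P y * phi (lawA P y x))"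
      by (intro sum_mono) auto
    thus ?thesis by simp
  qed
  also have "\<dots> = shannon_entropy (probX P)" by (simp add: ent_phi)
  finally show ?thesis .
qed

end
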